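(* Let $S$ be the three-vertex tree with root $a$, whose right child is $b$, where $b$ has a left child $c$ (preorder $132$), and let $S'$ be the three-vertex tree with a root having both a left child and a right child (preorder $213$); all edges of $S$ and $S'$ are contiguous. Let $(P,e)$ be any tree pattern. Let $Q$ be obtained from $S$ by attaching $(P,e)$ as the left subtree of the root $a$ via a non-contiguous edge, and let $Q'$ be obtained from $S'$ by attaching $(P,e)$ as the left subtree of the right leaf of $S'$ via a non-contiguous edge. Then $Q$ and $Q'$ are Wilf-equivalent.
   Context: $\mathcal{T}_n$ is the set of binary trees on $n$ vertices labeled $1,\dots,n$ by the search tree property (labels of combined trees reassigned by this property). $c_L,c_R,p$: left child, right child, parent. A tree pattern is $(P,e)$, $P\in\mathcal{T}_k$, $e\colon[k]\setminus\{\text{root}\}\to\{0,1\}$; edge $(i,p(i))$ is contiguous if $e(i)=1$, non-contiguous if $e(i)=0$. $T\in\mathcal{T}_n$ contains $(P,e)$ if there is an injection $f\colon[k]\to[n]$ such that for every non-root $i$ of $P$: if $e(i)=1$, $f(i)$ is the left (resp. right) child of $f(p(i))$ when $i$ is the left (resp. right) child of $p(i)$; if $e(i)=0$, $f(i)$ lies in the left (resp. right) subtree of $f(p(i))$. $\mathcal{T}_n(Q)$ is the set of avoiders of $Q$. $Q,Q'$ are Wilf-equivalent if $|\mathcal{T}_n(Q)|=|\mathcal{T}_n(Q')|$ for all $n\ge0$. *)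

theory Defs
  imports Main
begin

text \<open>Unlabelled binary trees. The labels 1..n of a tree in T_n are determined by
the binary search tree property (in-order), so a tree in T_n is just a shape
with n nodes.\<close>
datatype bt = Tip | Nd bt bt

fun bsize :: "bt \<Rightarrow> nat" where
  "bsize Tip = 0"
| "bsize (Nd l r) = Suc (bsize l + bsize r)"

text \<open>Nodes are addressed by paths from the root (False = go left, True = go right).\<close>
fun bpos :: "bt \<Rightarrow> bool list set" where
  "bpos Tip = {}"
| "bpos (Nd l r) = insert [] (Cons False ` bpos l \<union> Cons True ` bpos r)"

text \<open>Tree patterns (P,e): a binary tree whose every node carries a boolean, the
value of e on the edge to its parent (True = contiguous, False = non-contiguous).
The boolean at the root is meaningless and ignored.\<close>
datatype pt = PTip | PNd pt bool pt

fun ppos :: "pt \<Rightarrow> bool list set" where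
  "ppos PTip = {}"
| "ppos (PNd l b r) = insert [] (Cons False ` ppos l \<union> Cons True ` ppos r)"

fun pedge :: "pt \<Rightarrow> bool list \<Rightarrow> bool" where
  "pedge PTip _ = False"
| "pedge (PNd l b r) [] = b"
| "pedge (PNd l b r) (False # p) = pedge l p"
| "pedge (PNd l b r) (True # p) = pedge r p"

definition contains :: "bt \<Rightarrow> pt \<Rightarrow> bool" where
  "contains T P \<longleftrightarrow> (\<exists>f. inj_on f (ppos P) \<and> f ` ppos P \<subseteq> bpos T \<and>
     (\<forall>q d. q @ [d] \<in> ppos P \<longrightarrow>
        (if pedge P (q @ [d]) then f (q @ [d]) = f q @ [d]
         else (\<exists>w. f (q @ [d]) = f q @ (d # w)))))"

definition avoiders :: "nat \<Rightarrow> pt \<Rightarrow> bt set" where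
  "avoiders n Q = {T. bsize T = n \<and> \<not> contains T Q}"

definition wilf_equiv :: "pt \<Rightarrow> pt \<Rightarrow> bool" where
  "wilf_equiv Q Q' \<longleftrightarrow> (\<forall>n. card (avoiders n Q) = card (avoiders n Q'))"

fun set_root_edge :: "bool \<Rightarrow> pt \<Rightarrow> pt" where
  "set_root_edge b PTip = PTip"
| "set_root_edge b (PNd l _ r) = PNd l b r"

definition Q_of :: "pt \<Rightarrow> pt" where
  "Q_of P = PNd (set_root_edge False P) True (PNd (PNd PTip True PTip) True PTip)"

definition Q'_of :: "pt \<Rightarrow> pt" where
  "Q'_of P = PNd (PNd PTip True PTip) True (PNd (set_root_edge False P) True PTip)"

end

theory Submission
  imports Defs
begin

fun atw :: "bt \<Rightarrow> bool list \<Rightarrow> pt \<Rightarrow> bool" where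
  "atw T w PTip = True"
| "atw T w (PNd l b r) = (w \<in> bpos T \<and>
     (if pedge l [] then atw T (w @ [False]) l else (\<exists>u. atw T (w @ False # u) l)) \<and>
     (if pedge r [] then atw T (w @ [True]) r else (\<exists>u. atw T (w @ True # u) r)))"

definition EC :: "pt \<Rightarrow> (bool list \<Rightarrow> bool list) \<Rightarrow> bool" where
  "EC X f \<longleftrightarrow> (\<forall>q d. q @ [d] \<in> ppos X \<longrightarrow>
        (if pedge X (q @ [d]) then f (q @ [d]) = f q @ [d]
         else (\<exists>w. f (q @ [d]) = f q @ (d # w))))"

lemma ppos_prefix: "q @ [d] \<in> ppos X \<Longrightarrow> q \<in> ppos X"
proof (induction X arbitrary: q)
  case PTip then show ?case by simp
next
  case (PNd l b r)
  then show ?case by (cases q) auto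
qed

lemma EC_prefix:
  assumes "EC X f" "p \<in> ppos X"
  shows "\<exists>u. f p = f [] @ u"
  using assms(2)
proof (induction p rule: rev_induct)
  case Nil then show ?case by simp
next
  case (snoc d q)
  have "q \<in> ppos X" using snoc.prems ppos_prefix by blast
  then obtain u where u: "f q = f [] @ u" using snoc.IH by blast
  from assms(1) snoc.prems have
    "(if pedge X (q @ [d]) then f (q @ [d]) = f q @ [d] else (\<exists>w. f (q @ [d]) = f q @ (d # w)))"
    unfolding EC_def by blast
  then show ?case using u by (auto split: if_splits)
qed

lemma ppos_root: "[] \<in> ppos X \<longleftrightarrow> X \<noteq> PTip" by (cases X) auto

lemma ppos_Cons: "c # p \<in> ppos (PNd l b r) \<longleftrightarrow> p \<in> ppos (if c then r else l)"
  by (cases c) auto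

lemma EC_PNd:
  "EC (PNd l b r) f \<longleftrightarrow> EC l (f \<circ> Cons False) \<and> EC r (f \<circ> Cons True) \<and>
     (l \<noteq> PTip \<longrightarrow> (if pedge l [] then f [False] = f [] @ [False] else (\<exists>w. f [False] = f [] @ False # w))) \<and>
     (r \<noteq> PTip \<longrightarrow> (if pedge r [] then f [True] = f [] @ [True] else (\<exists>w. f [True] = f [] @ True # w)))"
  (is "?L \<longleftrightarrow> ?R")
proof
  assume H: ?L
  have H': "q @ [d] \<in> ppos (PNd l b r) \<Longrightarrow> (if pedge (PNd l b r) (q @ [d]) then f (q @ [d]) = f q @ [d]
         else (\<exists>w. f (q @ [d]) = f q @ (d # w)))" for q d using H unfolding EC_def by blast
  have 1: "EC l (f \<circ> Cons False)" unfolding EC_def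
  proof (intro allI impI)
    fix q d assume "q @ [d] \<in> ppos l"
    then show "if pedge l (q @ [d]) then (f \<circ> Cons False) (q @ [d]) = (f \<circ> Cons False) q @ [d]
         else (\<exists>w. (f \<circ> Cons False) (q @ [d]) = (f \<circ> Cons False) q @ (d # w))"
      using H'[of "False # q" d] by (auto simp: ppos_Cons split: if_splits)
  qed
  have 2: "EC r (f \<circ> Cons True)" unfolding EC_def
  proof (intro allI impI)
    fix q d assume "q @ [d] \<in> ppos r"
    then show "if pedge r (q @ [d]) then (f \<circ> Cons True) (q @ [d]) = (f \<circ> Cons True) q @ [d]
         else (\<exists>w. (f \<circ> Cons True) (q @ [d]) = (f \<circ> Cons True) q @ (d # w))"
      using H'[of "True # q" d] by (auto simp: ppos_Cons split: if_splits)
  qed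
  have 3: "l \<noteq> PTip \<longrightarrow> (if pedge l [] then f [False] = f [] @ [False] else (\<exists>w. f [False] = f [] @ False # w))"
    proof
    assume "l \<noteq> PTip"
    then have "[] @ [False] \<in> ppos (PNd l b r)" by (cases l) auto
    from H'[OF this] show "if pedge l [] then f [False] = f [] @ [False] else (\<exists>w. f [False] = f [] @ False # w)" by (simp split: if_splits)
  qed
  have 4: "r \<noteq> PTip \<longrightarrow> (if pedge r [] then f [True] = f [] @ [True] else (\<exists>w. f [True] = f [] @ True # w))"
    proof
    assume "r \<noteq> PTip"
    then have "[] @ [True] \<in> ppos (PNd l b r)" by (cases r) auto
    from H'[OF this] show "if pedge r [] then f [True] = f [] @ [True] else (\<exists>w. f [True] = f [] @ True # w)" by (simp split: if_splits)
  qed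
  show ?R using 1 2 3 4 by blast
next
  assume H: ?R
  show ?L unfolding EC_def
  proof (intro allI impI)
    fix q d assume m: "q @ [d] \<in> ppos (PNd l b r)"
    show "if pedge (PNd l b r) (q @ [d]) then f (q @ [d]) = f q @ [d]
         else (\<exists>w. f (q @ [d]) = f q @ (d # w))"
    proof (cases q)
      case Nil
      then show ?thesis using m H by (cases d) (auto simp: ppos_root)
    next
      case (Cons c q')
      show ?thesis
      proof (cases c)
        case True
        with m Cons have "q' @ [d] \<in> ppos r" by auto
        with H have "if pedge r (q' @ [d]) then (f \<circ> Cons True) (q' @ [d]) = (f \<circ> Cons True) q' @ [d]
         else (\<exists>w. (f \<circ> Cons True) (q' @ [d]) = (f \<circ> Cons True) q' @ (d # w))"
          unfolding EC_def by blast
        then show ?thesis using Cons True by (simp split: if_splits)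
      next
        case False
        with m Cons have "q' @ [d] \<in> ppos l" by auto
        with H have "if pedge l (q' @ [d]) then (f \<circ> Cons False) (q' @ [d]) = (f \<circ> Cons False) q' @ [d]
         else (\<exists>w. (f \<circ> Cons False) (q' @ [d]) = (f \<circ> Cons False) q' @ (d # w))"
          unfolding EC_def by blast
        then show ?thesis using Cons False by (simp split: if_splits)
      qed
    qed
  qed
qed

lemma inj_comp_Cons:
  assumes "inj_on f (ppos (PNd l b r))"
  shows "inj_on (f \<circ> Cons False) (ppos l)" "inj_on (f \<circ> Cons True) (ppos r)"
proof -
  have "inj_on f (Cons False ` ppos l)" using assms by (rule inj_on_subset) auto
  then show "inj_on (f \<circ> Cons False) (ppos l)" by (intro comp_inj_on) auto
  have "inj_on f (Cons True ` ppos r)" using assms by (rule inj_on_subset) auto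
  then show "inj_on (f \<circ> Cons True) (ppos r)" by (intro comp_inj_on) auto
qed

lemma atw_iff:
  "atw T w X \<longleftrightarrow> (\<exists>f. f [] = w \<and> inj_on f (ppos X) \<and> f ` ppos X \<subseteq> bpos T \<and> EC X f)"
proof (induction X arbitrary: w)
  case PTip
  show ?case by (auto simp: EC_def intro!: exI[of _ "\<lambda>_. w"])
next
  case (PNd l b r)
  show ?case
  proof
    assume A: "atw T w (PNd l b r)"
    then have wT: "w \<in> bpos T" by simp
    have "\<exists>fl. inj_on fl (ppos l) \<and> fl ` ppos l \<subseteq> bpos T \<and> EC l fl \<and>
        (if pedge l [] then fl [] = w @ [False] else (\<exists>u. fl [] = w @ False # u))"
    proof (cases "pedge l []")
      case True
      then have "atw T (w @ [False]) l" using A by simp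
      then show ?thesis using True PNd.IH(1) by auto
    next
      case False
      then obtain u where "atw T (w @ False # u) l" using A by auto
      then show ?thesis using False PNd.IH(1)[of "w @ False # u"] by auto
    qed
    then obtain fl where fl: "inj_on fl (ppos l)" "fl ` ppos l \<subseteq> bpos T" "EC l fl"
        "if pedge l [] then fl [] = w @ [False] else (\<exists>u. fl [] = w @ False # u)" by blast
    have "\<exists>fr. inj_on fr (ppos r) \<and> fr ` ppos r \<subseteq> bpos T \<and> EC r fr \<and>
        (if pedge r [] then fr [] = w @ [True] else (\<exists>u. fr [] = w @ True # u))"
    proof (cases "pedge r []")
      case True
      then have "atw T (w @ [True]) r" using A by simp
      then show ?thesis using True PNd.IH(2) by auto
    next
      case False
      then obtain u where "atw T (w @ True # u) r" using A by auto
      then show ?thesis using False PNd.IH(2)[of "w @ True # u"] by auto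
    qed
    then obtain fr where fr: "inj_on fr (ppos r)" "fr ` ppos r \<subseteq> bpos T" "EC r fr"
        "if pedge r [] then fr [] = w @ [True] else (\<exists>u. fr [] = w @ True # u)" by blast
    have fl0: "\<exists>v. fl [] = w @ False # v" using fl(4) by (auto split: if_splits)
    have fr0: "\<exists>v. fr [] = w @ True # v" using fr(4) by (auto split: if_splits)
    have flp: "\<exists>v. fl p = w @ False # v" if "p \<in> ppos l" for p
      using EC_prefix[OF fl(3) that] fl0 by auto
    have frp: "\<exists>v. fr p = w @ True # v" if "p \<in> ppos r" for p
      using EC_prefix[OF fr(3) that] fr0 by auto
    define f where "f p = (case p of [] \<Rightarrow> w | c # p' \<Rightarrow> if c then fr p' else fl p')" for p
    have fc1: "f \<circ> Cons False = fl" and fc2: "f \<circ> Cons True = fr" by (auto simp: f_def)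
    have inj: "inj_on f (ppos (PNd l b r))"
    proof (rule inj_onI)
      fix x y assume x: "x \<in> ppos (PNd l b r)" and y: "y \<in> ppos (PNd l b r)" and e: "f x = f y"
      show "x = y"
      proof (cases x)
        case Nil
        then show ?thesis using y e flp frp by (cases y) (auto simp: f_def split: if_splits)
      next
        case (Cons c x')
        show ?thesis
        proof (cases y)
          case Nil
          then show ?thesis using x e flp frp Cons by (auto simp: f_def split: if_splits)
        next
          case (Cons c' y')
          show ?thesis
          proof (cases c; cases c')
            assume "c" "c'"
            then show ?thesis using x y e \<open>x = c # x'\<close> Cons fr(1) by (auto simp: f_def inj_on_def)
          next
            assume "c" "\<not> c'"
            then show ?thesis using x y e \<open>x = c # x'\<close> Cons flp frp by (fastforce simp: f_def)
          next
            assume "\<not> c" "c'"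
            then show ?thesis using x y e \<open>x = c # x'\<close> Cons flp frp by (fastforce simp: f_def)
          next
            assume "\<not> c" "\<not> c'"
            then show ?thesis using x y e \<open>x = c # x'\<close> Cons fl(1) by (auto simp: f_def inj_on_def)
          qed
        qed
      qed
    qed
    have img: "f ` ppos (PNd l b r) \<subseteq> bpos T" using wT fl(2) fr(2) by (auto simp: f_def)
    have ec: "EC (PNd l b r) f" unfolding EC_PNd fc1 fc2 using fl fr
      by (auto simp: f_def split: if_splits)
    show "\<exists>f. f [] = w \<and> inj_on f (ppos (PNd l b r)) \<and> f ` ppos (PNd l b r) \<subseteq> bpos T \<and> EC (PNd l b r) f"
    proof -
      have "f [] = w" by (simp add: f_def)
      then show ?thesis using inj img ec by blast
    qed
  next
    assume "\<exists>f. f [] = w \<and> inj_on f (ppos (PNd l b r)) \<and> f ` ppos (PNd l b r) \<subseteq> bpos T \<and> EC (PNd l b r) f"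
    then obtain f where f: "f [] = w" "inj_on f (ppos (PNd l b r))" "f ` ppos (PNd l b r) \<subseteq> bpos T"
      "EC (PNd l b r) f" by blast
    have wT: "w \<in> bpos T" using f(1,3) by auto
    note ec = f(4)[unfolded EC_PNd]
    have L: "if pedge l [] then atw T (w @ [False]) l else (\<exists>u. atw T (w @ False # u) l)"
    proof (cases "l = PTip")
      case True then show ?thesis by simp
    next
      case False
      have "atw T (f [False]) l"
        using PNd.IH(1)[of "f [False]"] inj_comp_Cons(1)[OF f(2)] f(3) ec by (auto intro!: exI[of _ "f \<circ> Cons False"])
      then show ?thesis using ec False f(1) by (auto split: if_splits)
    qed
    have R: "if pedge r [] then atw T (w @ [True]) r else (\<exists>u. atw T (w @ True # u) r)"
    proof (cases "r = PTip")
      case True then show ?thesis by simp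
    next
      case False
      have "atw T (f [True]) r"
        using PNd.IH(2)[of "f [True]"] inj_comp_Cons(2)[OF f(2)] f(3) ec by (auto intro!: exI[of _ "f \<circ> Cons True"])
      then show ?thesis using ec False f(1) by (auto split: if_splits)
    qed
    show "atw T w (PNd l b r)" using wT L R by simp
  qed
qed

lemma contains_atw: "contains T X \<longleftrightarrow> (\<exists>w. atw T w X)"
  unfolding contains_def atw_iff EC_def by blast

lemma bpos_Cons: "d # w \<in> bpos (Nd L R) \<longleftrightarrow> w \<in> bpos (if d then R else L)"
  by (cases d) auto

lemma bpos_root: "[] \<in> bpos T \<longleftrightarrow> T \<noteq> Tip" by (cases T) auto

lemma atw_Cons: "atw (Nd L R) (d # w) X = atw (if d then R else L) w X"
  by (induction X arbitrary: w) (simp_all add: bpos_Cons del: bpos.simps)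

lemma atw_Tip: "atw Tip w X \<longleftrightarrow> X = PTip" by (cases X) auto

lemma atw_set_root: "atw T w (set_root_edge b X) = atw T w X" by (cases X) auto

definition hasp :: "bt \<Rightarrow> pt \<Rightarrow> bool" where "hasp T X \<longleftrightarrow> (\<exists>w. atw T w X)"

lemma hasp_Tip: "hasp Tip X \<longleftrightarrow> X = PTip" by (simp add: hasp_def atw_Tip)

lemma hasp_Nd: "hasp (Nd L R) X \<longleftrightarrow> atw (Nd L R) [] X \<or> hasp L X \<or> hasp R X"
  unfolding hasp_def
proof
  assume "\<exists>w. atw (Nd L R) w X"
  then obtain w where "atw (Nd L R) w X" by blast
  then show "atw (Nd L R) [] X \<or> (\<exists>w. atw L w X) \<or> (\<exists>w. atw R w X)"
    by (cases w) (auto simp: atw_Cons split: if_splits)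
next
  assume "atw (Nd L R) [] X \<or> (\<exists>w. atw L w X) \<or> (\<exists>w. atw R w X)"
  then show "\<exists>w. atw (Nd L R) w X"
    by (metis atw_Cons)
qed

lemma hasp_contains: "contains T X = hasp T X" by (simp add: contains_atw hasp_def)

lemma cQ_Nd:
  assumes "P \<noteq> PTip"
  shows "hasp (Nd L R) (Q_of P) \<longleftrightarrow> (hasp L P \<and> (\<exists>a b c. R = Nd (Nd a b) c)) \<or> hasp L (Q_of P) \<or> hasp R (Q_of P)"
proof -
  have pe: "pedge (set_root_edge False P) [] = False" using assms by (cases P) auto
  have "atw (Nd L R) [] (Q_of P) \<longleftrightarrow> hasp L P \<and> (\<exists>a b c. R = Nd (Nd a b) c)"
    using pe by (cases R; cases "case R of Nd a b \<Rightarrow> a") (auto simp: Q_of_def atw_Cons hasp_def atw_set_root bpos_root)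
  then show ?thesis by (simp add: hasp_Nd)
qed

lemma cQ'_Nd:
  assumes "P \<noteq> PTip"
  shows "hasp (Nd L R) (Q'_of P) \<longleftrightarrow> (L \<noteq> Tip \<and> (\<exists>a c. R = Nd a c \<and> hasp a P)) \<or> hasp L (Q'_of P) \<or> hasp R (Q'_of P)"
proof -
  have pe: "pedge (set_root_edge False P) [] = False" using assms by (cases P) auto
  have "atw (Nd L R) [] (Q'_of P) \<longleftrightarrow> (L \<noteq> Tip \<and> (\<exists>a c. R = Nd a c \<and> hasp a P))"
    using pe by (cases R) (auto simp: Q'_of_def atw_Cons hasp_def atw_set_root bpos_root)
  then show ?thesis by (simp add: hasp_Nd)
qed

fun chain :: "bt list \<Rightarrow> bt" where
  "chain [] = Tip"
| "chain (L # Ls) = Nd L (chain Ls)"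

fun spine :: "bt \<Rightarrow> bt list" where
  "spine Tip = []"
| "spine (Nd L R) = L # spine R"

lemma chain_spine [simp]: "chain (spine T) = T" by (induction T) auto
lemma spine_chain [simp]: "spine (chain Ls) = Ls" by (induction Ls) auto

lemma bsize_chain: "bsize (chain Ls) = sum_list (map (\<lambda>L. Suc (bsize L)) Ls)"
  by (induction Ls) auto

lemma spine_size: "L \<in> set (spine T) \<Longrightarrow> bsize L < bsize T"
  by (induction T) auto

lemma bsize0: "bsize T = 0 \<longleftrightarrow> T = Tip" by (cases T) auto

lemma finite_size: "finite {T. bsize T \<le> n}"
proof (induction n)
  case 0
  have "{T. bsize T \<le> 0} = {Tip}" by (auto simp: bsize0)
  then show ?case by simp
next
  case (Suc n)
  have "{T. bsize T \<le> Suc n} \<subseteq> insert Tip ((\<lambda>(L, R). Nd L R) ` ({T. bsize T \<le> n} \<times> {T. bsize T \<le> n}))"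
  proof
    fix T assume "T \<in> {T. bsize T \<le> Suc n}"
    then show "T \<in> insert Tip ((\<lambda>(L, R). Nd L R) ` ({T. bsize T \<le> n} \<times> {T. bsize T \<le> n}))"
      by (cases T) auto
  qed
  moreover have "finite (insert Tip ((\<lambda>(L, R). Nd L R) ` ({T. bsize T \<le> n} \<times> {T. bsize T \<le> n})))"
    using Suc by auto
  ultimately show ?case by (rule finite_subset)
qed

lemma finite_size_eq: "finite {T. bsize T = n \<and> Q T}"
  by (rule finite_subset[OF _ finite_size[of n]]) auto

lemma bij_split:
  assumes fA: "finite A" and fB: "finite B" and c: "card A = card B"
    and N: "{x\<in>A. \<not> h x} = {x\<in>B. \<not> h x}"
  shows "\<exists>\<psi>. bij_betw \<psi> A B \<and> (\<forall>x\<in>A. h (\<psi> x) = h x)"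
proof -
  let ?AH = "{x\<in>A. h x}" and ?BH = "{x\<in>B. h x}" and ?N = "{x\<in>A. \<not> h x}"
  have dA: "A = ?AH \<union> ?N" by auto
  have dB: "B = ?BH \<union> ?N" using N by auto
  have "card A = card ?AH + card ?N" using fA by (subst dA, subst card_Un_disjoint) auto
  moreover have "card B = card ?BH + card ?N" using fB N by (subst dB, subst card_Un_disjoint) auto
  ultimately have "card ?AH = card ?BH" using c by simp
  then obtain g where g: "bij_betw g ?AH ?BH" using finite_same_card_bij[of ?AH ?BH] fA fB by auto
  define \<psi> where "\<psi> x = (if h x then g x else x)" for x
  have 1: "bij_betw \<psi> ?AH ?BH" using g by (rule bij_betw_cong[THEN iffD1, rotated]) (auto simp: \<psi>_def)
  have 2: "bij_betw \<psi> ?N ?N" by (rule bij_betw_cong[THEN iffD1, of _ id]) (auto simp: \<psi>_def)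
  have "bij_betw \<psi> (?AH \<union> ?N) (?BH \<union> ?N)" by (rule bij_betw_combine[OF 1 2]) auto
  then have "bij_betw \<psi> A B" using dA dB by simp
  moreover have "\<forall>x\<in>A. h (\<psi> x) = h x" using g by (auto simp: \<psi>_def bij_betw_def)
  ultimately show ?thesis by blast
qed

context
  fixes P :: pt
  assumes P: "P \<noteq> PTip"
begin

lemma cQ_P: "hasp T (Q_of P) \<Longrightarrow> hasp T P"
proof (induction T)
  case Tip then show ?case by (simp add: hasp_Tip Q_of_def)
next
  case (Nd L R)
  from Nd.prems have "(hasp L P \<and> (\<exists>a b c. R = Nd (Nd a b) c)) \<or> hasp L (Q_of P) \<or> hasp R (Q_of P)"
    by (simp only: cQ_Nd[OF P])
  then have "hasp L P \<or> hasp R P" using Nd.IH by blast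
  then show ?case by (auto simp: hasp_Nd)
qed

lemma cQ'_P: "hasp T (Q'_of P) \<Longrightarrow> hasp T P"
proof (induction T)
  case Tip then show ?case by (simp add: hasp_Tip Q'_of_def)
next
  case (Nd L R)
  from Nd.prems have "(L \<noteq> Tip \<and> (\<exists>a c. R = Nd a c \<and> hasp a P)) \<or> hasp L (Q'_of P) \<or> hasp R (Q'_of P)"
    by (simp only: cQ'_Nd[OF P])
  then have "hasp L P \<or> hasp R P" using Nd.IH by (auto simp: hasp_Nd)
  then show ?case by (auto simp: hasp_Nd)
qed

lemma cQ_chain: "hasp (chain Ls) (Q_of P) \<longleftrightarrow>
   (\<exists>L\<in>set Ls. hasp L (Q_of P)) \<or> \<not> successively (\<lambda>a b. \<not> (hasp a P \<and> b \<noteq> Tip)) Ls"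
proof (induction Ls)
  case Nil then show ?case by (simp add: hasp_Tip Q_of_def)
next
  case (Cons L Ls)
  have e: "(\<exists>a b c. chain Ls = Nd (Nd a b) c) \<longleftrightarrow> (Ls \<noteq> [] \<and> hd Ls \<noteq> Tip)"
    by (cases Ls; cases "hd Ls") auto
  show ?case using Cons by (auto simp: cQ_Nd[OF P] e successively_Cons)
qed

lemma cQ'_chain: "hasp (chain Ls) (Q'_of P) \<longleftrightarrow>
   (\<exists>L\<in>set Ls. hasp L (Q'_of P)) \<or> \<not> successively (\<lambda>a b. \<not> (a \<noteq> Tip \<and> hasp b P)) Ls"
proof (induction Ls)
  case Nil then show ?case by (simp add: hasp_Tip Q'_of_def)
next
  case (Cons L Ls)
  have e: "(\<exists>a c. chain Ls = Nd a c \<and> hasp a P) \<longleftrightarrow> (Ls \<noteq> [] \<and> hasp (hd Ls) P)"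
    by (cases Ls) auto
  show ?case using Cons by (cases Ls) (auto simp: cQ'_Nd[OF P] successively_Cons)
qed

lemma main: "card {T. bsize T = n \<and> \<not> hasp T (Q_of P)} = card {T. bsize T = n \<and> \<not> hasp T (Q'_of P)}"
proof (induction n rule: less_induct)
  case (less n)
  define A where "A m = {T. bsize T = m \<and> \<not> hasp T (Q_of P)}" for m
  define B where "B m = {T. bsize T = m \<and> \<not> hasp T (Q'_of P)}" for m
  have ex: "\<forall>m. \<exists>\<psi>. m < n \<longrightarrow> bij_betw \<psi> (A m) (B m) \<and> (\<forall>T\<in>A m. hasp (\<psi> T) P = hasp T P)"
  proof (intro allI)
    fix m
    show "\<exists>\<psi>. m < n \<longrightarrow> bij_betw \<psi> (A m) (B m) \<and> (\<forall>T\<in>A m. hasp (\<psi> T) P = hasp T P)"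
    proof (cases "m < n")
      case True
      have c: "card (A m) = card (B m)" using less True by (simp add: A_def B_def)
      have N: "{x\<in>A m. \<not> hasp x P} = {x\<in>B m. \<not> hasp x P}" using cQ_P cQ'_P by (auto simp: A_def B_def)
      have "finite (A m)" "finite (B m)" unfolding A_def B_def by (rule finite_size_eq)+
      then show ?thesis using bij_split[OF _ _ c N] by blast
    next
      case False then show ?thesis by blast
    qed
  qed
  then obtain \<Psi> where \<Psi>: "\<And>m. m < n \<Longrightarrow> bij_betw (\<Psi> m) (A m) (B m) \<and> (\<forall>T\<in>A m. hasp (\<Psi> m T) P = hasp T P)"
    by metis
  define \<psi> where "\<psi> T = \<Psi> (bsize T) T" for T
  define \<psi>' where "\<psi>' T = inv_into (A (bsize T)) (\<Psi> (bsize T)) T" for T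
  have \<psi>A: "\<psi> T \<in> B m \<and> hasp (\<psi> T) P = hasp T P \<and> \<psi>' (\<psi> T) = T" if "T \<in> A m" "m < n" for T m
  proof -
    have bs: "bsize T = m" using that by (simp add: A_def)
    have b: "bij_betw (\<Psi> m) (A m) (B m)" using \<Psi> that(2) by blast
    have 1: "\<psi> T \<in> B m" using bs bij_betwE[OF b] that(1) by (simp add: \<psi>_def)
    then have "bsize (\<psi> T) = m" by (simp add: B_def)
    then have "\<psi>' (\<psi> T) = T" using bij_betw_inv_into_left[OF b that(1)] bs by (simp add: \<psi>'_def \<psi>_def)
    then show ?thesis using 1 \<Psi> that bs by (auto simp: \<psi>_def)
  qed
  have \<psi>B: "\<psi>' T \<in> A m \<and> hasp (\<psi>' T) P = hasp T P \<and> \<psi> (\<psi>' T) = T" if "T \<in> B m" "m < n" for T m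
  proof -
    have bs: "bsize T = m" using that by (simp add: B_def)
    have b: "bij_betw (\<Psi> m) (A m) (B m)" using \<Psi> that(2) by blast
    have 1: "\<psi>' T \<in> A m" using bs bij_betwE[OF bij_betw_inv_into[OF b]] that(1) by (simp add: \<psi>'_def)
    then have "bsize (\<psi>' T) = m" by (simp add: A_def)
    then have 2: "\<psi> (\<psi>' T) = T" using bij_betw_inv_into_right[OF b that(1)] bs by (simp add: \<psi>'_def \<psi>_def)
    have "hasp (\<psi> (\<psi>' T)) P = hasp (\<psi>' T) P" using \<psi>A[OF 1 that(2)] by blast
    then show ?thesis using 1 2 by simp
  qed
  have memA: "L \<in> A (bsize L) \<and> bsize L < n" if "T \<in> A n" "L \<in> set (spine T)" for T L
  proof -
    have "\<not> hasp (chain (spine T)) (Q_of P)" using that(1) by (simp add: A_def)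
    then show ?thesis using that spine_size[OF that(2)] unfolding cQ_chain by (auto simp: A_def)
  qed
  have memB: "L \<in> B (bsize L) \<and> bsize L < n" if "T \<in> B n" "L \<in> set (spine T)" for T L
  proof -
    have "\<not> hasp (chain (spine T)) (Q'_of P)" using that(1) by (simp add: B_def)
    then show ?thesis using that spine_size[OF that(2)] unfolding cQ'_chain by (auto simp: B_def)
  qed
  have sizeeq: "bsize (chain (rev (map g Ls))) = bsize (chain Ls)" if "\<forall>L\<in>set Ls. bsize (g L) = bsize L" for g Ls
  proof -
    have eq: "map ((\<lambda>L. Suc (bsize L)) \<circ> g) Ls = map (\<lambda>L. Suc (bsize L)) Ls" using that by (auto intro: map_cong)
    show ?thesis unfolding bsize_chain rev_map[symmetric] sum_list_rev map_map eq by (rule refl)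
  qed
  define \<Phi> where "\<Phi> T = chain (rev (map \<psi> (spine T)))" for T
  define \<Phi>' where "\<Phi>' T = chain (rev (map \<psi>' (spine T)))" for T
  have "bij_betw \<Phi> (A n) (B n)"
  proof (rule bij_betw_byWitness[where f'=\<Phi>'])
    show "\<forall>T\<in>A n. \<Phi>' (\<Phi> T) = T"
    proof
      fix T assume T: "T \<in> A n"
      have "map (\<psi>' \<circ> \<psi>) (spine T) = spine T"
        using \<psi>A memA[OF T] by (intro map_idI) auto
      then have "\<Phi>' (\<Phi> T) = chain (spine T)" by (simp add: \<Phi>_def \<Phi>'_def rev_map)
      then show "\<Phi>' (\<Phi> T) = T" by simp
    qed
    show "\<forall>T\<in>B n. \<Phi> (\<Phi>' T) = T"
    proof
      fix T assume T: "T \<in> B n"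
      have "map (\<psi> \<circ> \<psi>') (spine T) = spine T"
        using \<psi>B memB[OF T] by (intro map_idI) auto
      then have "\<Phi> (\<Phi>' T) = chain (spine T)" by (simp add: \<Phi>_def \<Phi>'_def rev_map)
      then show "\<Phi> (\<Phi>' T) = T" by simp
    qed
    show "\<Phi> ` A n \<subseteq> B n"
    proof
      fix T' assume "T' \<in> \<Phi> ` A n"
      then obtain T where T: "T \<in> A n" and T': "T' = \<Phi> T" by blast
      let ?Ls = "spine T"
      have pr: "\<And>L. L \<in> set ?Ls \<Longrightarrow> \<psi> L \<in> B (bsize L) \<and> hasp (\<psi> L) P = hasp L P \<and> bsize (\<psi> L) = bsize L"
        using \<psi>A memA[OF T] by (auto simp: B_def)
      have sz: "bsize T' = n" using sizeeq[of ?Ls \<psi>] pr T T' by (simp add: \<Phi>_def A_def)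
      have nT: "\<not> hasp (chain ?Ls) (Q_of P)" using T by (simp add: A_def)
      have s1: "successively (\<lambda>a b. \<not> (hasp a P \<and> b \<noteq> Tip)) ?Ls" using nT unfolding cQ_chain by blast
      have s2: "successively (\<lambda>a b. \<not> (a \<noteq> Tip \<and> hasp b P)) (rev (map \<psi> ?Ls))"
        unfolding successively_rev successively_map
        using s1 pr by (subst successively_cong[where Q="\<lambda>a b. \<not> (hasp a P \<and> b \<noteq> Tip)"]) (auto simp flip: bsize0)
      have "\<not> hasp T' (Q'_of P)" unfolding T' \<Phi>_def cQ'_chain using s2 pr by (auto simp: B_def)
      then show "T' \<in> B n" using sz by (simp add: B_def)
    qed
    show "\<Phi>' ` B n \<subseteq> A n"
    proof
      fix T' assume "T' \<in> \<Phi>' ` B n"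
      then obtain T where T: "T \<in> B n" and T': "T' = \<Phi>' T" by blast
      let ?Ls = "spine T"
      have pr: "\<And>L. L \<in> set ?Ls \<Longrightarrow> \<psi>' L \<in> A (bsize L) \<and> hasp (\<psi>' L) P = hasp L P \<and> bsize (\<psi>' L) = bsize L"
        using \<psi>B memB[OF T] by (auto simp: A_def)
      have sz: "bsize T' = n" using sizeeq[of ?Ls \<psi>'] pr T T' by (simp add: \<Phi>'_def B_def)
      have nT: "\<not> hasp (chain ?Ls) (Q'_of P)" using T by (simp add: B_def)
      have s1: "successively (\<lambda>a b. \<not> (a \<noteq> Tip \<and> hasp b P)) ?Ls" using nT unfolding cQ'_chain by blast
      have s2: "successively (\<lambda>a b. \<not> (hasp a P \<and> b \<noteq> Tip)) (rev (map \<psi>' ?Ls))"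
        unfolding successively_rev successively_map
        using s1 pr by (subst successively_cong[where Q="\<lambda>a b. \<not> (a \<noteq> Tip \<and> hasp b P)"]) (auto simp flip: bsize0)
      have "\<not> hasp T' (Q_of P)" unfolding T' \<Phi>'_def cQ_chain using s2 pr by (auto simp: A_def)
      then show "T' \<in> A n" using sz by (simp add: A_def)
    qed
  qed
  then show ?case using bij_betw_same_card unfolding A_def B_def by blast
qed

end

theorem lemma19:
  fixes P :: pt
  assumes "P \<noteq> PTip"
  shows "wilf_equiv (Q_of P) (Q'_of P)"
  unfolding wilf_equiv_def avoiders_def hasp_contains using main[OF assms] by blast

end
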